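(* Let $\circ$ be one of the binary operations $\cup,\cap,-$ on languages, and for sets of languages $\mathcal{R}_1,\mathcal{R}_2$ over $\Sigma$ define the Cartesian operation $\mathcal{R}_1\otimes\mathcal{R}_2=\{L_1\circ L_2\mid L_1\in\mathcal{R}_1,\ L_2\in\mathcal{R}_2\}$. (1) In general $\mathcal{R}_1\otimes\mathcal{R}_2$ is not a rational set of regular languages: there exist rational sets of regular languages $\mathcal{R}_1,\mathcal{R}_2$ for which it is not. (2) If $\mathcal{R}_1$ and $\mathcal{R}_2$ are finite rational sets of regular languages, then $\mathcal{R}_1\otimes\mathcal{R}_2$ is a rational set of regular languages. (3) In the latter case a new language substitution is in general required: there exist an alphabet $\Delta$, a regular language substitution $\varphi:\Delta\to2^{\Sigma^*}$ and regular $K_1,K_2\subseteq\Delta^+$ with $\mathcal{R}_i=(K_i,\varphi)$ finite such that there is no regular $K'\subseteq\Delta^+$ with $\mathcal{R}_1\otimes\mathcal{R}_2=(K',\varphi)$.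
   Context: Alphabets are nonempty finite sets. A regular language substitution $\varphi:\Delta\to2^{\Sigma^*}$ maps each symbol to a regular language over $\Sigma$, extended by $\varphi(\delta w)=\varphi(\delta)\varphi(w)$. A set $\mathcal{R}$ of regular languages over $\Sigma$ is a rational set of regular languages, written $\mathcal{R}=(K,\varphi)$, if there are an alphabet $\Delta$, a regular $K\subseteq\Delta^+$ and a regular language substitution $\varphi$ with $\mathcal{R}=\{\varphi(w)\mid w\in K\}$. *)

theory Defs
  imports Main
begin

datatype 'a rexp = Zero | One | Atom 'a | Plus "'a rexp" "'a rexp"
  | Times "'a rexp" "'a rexp" | Star "'a rexp"

definition conc :: "'a list set \<Rightarrow> 'a list set \<Rightarrow> 'a list set" where
  "conc A B = {u @ v | u v. u \<in> A \<and> v \<in> B}"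

inductive_set kleene_star :: "'a list set \<Rightarrow> 'a list set" for A where
  star_Nil: "[] \<in> kleene_star A"
| star_app: "u \<in> A \<Longrightarrow> v \<in> kleene_star A \<Longrightarrow> u @ v \<in> kleene_star A"

fun lang :: "'a rexp \<Rightarrow> 'a list set" where
  "lang Zero = {}"
| "lang One = {[]}"
| "lang (Atom a) = {[a]}"
| "lang (Plus r s) = lang r \<union> lang s"
| "lang (Times r s) = conc (lang r) (lang s)"
| "lang (Star r) = kleene_star (lang r)"

definition regular :: "'a list set \<Rightarrow> bool" where
  "regular L \<longleftrightarrow> (\<exists>r. lang r = L)"

definition regular_over :: "'a set \<Rightarrow> 'a list set \<Rightarrow> bool" where
  "regular_over S L \<longleftrightarrow> regular L \<and> L \<subseteq> lists S"

definition alphabet :: "'a set \<Rightarrow> bool" where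
  "alphabet S \<longleftrightarrow> finite S \<and> S \<noteq> {}"

definition plus_words :: "'d set \<Rightarrow> 'd list set" where
  "plus_words D = lists D - {[]}"

definition reg_subst :: "'d set \<Rightarrow> 'a set \<Rightarrow> ('d \<Rightarrow> 'a list set) \<Rightarrow> bool" where
  "reg_subst D S phi \<longleftrightarrow> (\<forall>d\<in>D. regular_over S (phi d))"

fun subst_word :: "('d \<Rightarrow> 'a list set) \<Rightarrow> 'd list \<Rightarrow> 'a list set" where
  "subst_word phi [] = {[]}"
| "subst_word phi (d # w) = conc (phi d) (subst_word phi w)"

text \<open>R = (K, phi): R is the rational set of regular languages given by K and phi.\<close>
definition presents :: "'a set \<Rightarrow> 'd set \<Rightarrow> 'd list set \<Rightarrow> ('d \<Rightarrow> 'a list set)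
    \<Rightarrow> 'a list set set \<Rightarrow> bool" where
  "presents S D K phi R \<longleftrightarrow> alphabet D \<and> reg_subst D S phi \<and>
     K \<subseteq> plus_words D \<and> regular K \<and> R = subst_word phi ` K"

text \<open>Rational set of regular languages over S. The alphabet Delta is taken with
  symbols in nat; every finite alphabet is (up to renaming) such a set.\<close>
definition rational_set :: "'a set \<Rightarrow> 'a list set set \<Rightarrow> bool" where
  "rational_set S R \<longleftrightarrow> (\<exists>(D::nat set) K phi. presents S D K phi R)"

datatype binop = OpUnion | OpInter | OpDiff

fun apply_op :: "binop \<Rightarrow> 'a list set \<Rightarrow> 'a list set \<Rightarrow> 'a list set" where
  "apply_op OpUnion A B = A \<union> B"
| "apply_op OpInter A B = A \<inter> B"
| "apply_op OpDiff A B = A - B"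

definition cart :: "binop \<Rightarrow> 'a list set set \<Rightarrow> 'a list set set \<Rightarrow> 'a list set set" where
  "cart op R1 R2 = {apply_op op L1 L2 | L1 L2. L1 \<in> R1 \<and> L2 \<in> R2}"

end

theory Submission
  imports Defs
begin


lemma regular_empty[simp]: "regular {}" unfolding regular_def by (rule exI[of _ Zero]) simp
lemma regular_eps[simp]: "regular {[]}" unfolding regular_def by (rule exI[of _ One]) simp
lemma regular_atom[simp]: "regular {[a]}" unfolding regular_def by (rule exI[of _ "Atom a"]) simp
lemma regular_Un[intro]: "regular A \<Longrightarrow> regular B \<Longrightarrow> regular (A \<union> B)"
proof -
  assume "regular A" "regular B"
  then obtain r s where "lang r = A" "lang s = B" unfolding regular_def by blast
  then have "lang (Plus r s) = A \<union> B" by simp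
  then show ?thesis unfolding regular_def by blast
qed
lemma regular_conc[intro]: "regular A \<Longrightarrow> regular B \<Longrightarrow> regular (conc A B)"
proof -
  assume "regular A" "regular B"
  then obtain r s where "lang r = A" "lang s = B" unfolding regular_def by blast
  then have "lang (Times r s) = conc A B" by simp
  then show ?thesis unfolding regular_def by blast
qed
lemma regular_star[intro]: "regular A \<Longrightarrow> regular (kleene_star A)"
proof -
  assume "regular A"
  then obtain r where "lang r = A" unfolding regular_def by blast
  then have "lang (Star r) = kleene_star A" by simp
  then show ?thesis unfolding regular_def by blast
qed

lemma conc_eps[simp]: "conc A {[]} = A" "conc {[]} A = A" unfolding conc_def by auto
lemma conc_empty[simp]: "conc A {} = {}" "conc {} A = {}" unfolding conc_def by auto
lemma conc_assoc: "conc (conc A B) C = conc A (conc B C)"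
proof (intro equalityI subsetI)
  fix x assume "x \<in> conc (conc A B) C"
  then obtain a b c where h: "x = (a @ b) @ c" "a \<in> A" "b \<in> B" "c \<in> C" unfolding conc_def by blast
  have "b @ c \<in> conc B C" using h unfolding conc_def by blast
  then have "a @ (b @ c) \<in> conc A (conc B C)" using h unfolding conc_def by blast
  then show "x \<in> conc A (conc B C)" using h by simp
next
  fix x assume "x \<in> conc A (conc B C)"
  then obtain a b c where h: "x = a @ (b @ c)" "a \<in> A" "b \<in> B" "c \<in> C" unfolding conc_def by blast
  have "a @ b \<in> conc A B" using h unfolding conc_def by blast
  then have "(a @ b) @ c \<in> conc (conc A B) C" using h unfolding conc_def by blast
  then show "x \<in> conc (conc A B) C" using h by simp
qed
lemma conc_Un1: "conc (A \<union> B) C = conc A C \<union> conc B C" unfolding conc_def by auto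
lemma conc_Un2: "conc A (B \<union> C) = conc A B \<union> conc A C" unfolding conc_def by auto
lemma conc_UN2: "conc A (\<Union>i\<in>I. B i) = (\<Union>i\<in>I. conc A (B i))" unfolding conc_def by auto
lemma conc_UN1: "conc (\<Union>i\<in>I. B i) A = (\<Union>i\<in>I. conc (B i) A)" unfolding conc_def by auto
lemma Nil_in_conc[simp]: "[] \<in> conc A B \<longleftrightarrow> [] \<in> A \<and> [] \<in> B" unfolding conc_def by auto
lemma conc_mono: "A \<subseteq> A' \<Longrightarrow> B \<subseteq> B' \<Longrightarrow> conc A B \<subseteq> conc A' B'" unfolding conc_def by blast

lemma regular_single: "regular {w}"
proof (induction w)
  case Nil then show ?case by simp
next
  case (Cons a w)
  have e: "{a # w} = conc {[a]} {w}" unfolding conc_def by auto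
  have "regular (conc {[a]} {w})" using Cons by (intro regular_conc regular_atom)
  then show ?case by (subst e)
qed

lemma regular_finite: "finite W \<Longrightarrow> regular W"
proof (induction rule: finite_induct)
  case empty then show ?case by simp
next
  case (insert x F)
  have "insert x F = {x} \<union> F" by simp
  then show ?case using regular_single[of x] regular_Un[of "{x}" F] insert.IH by simp
qed

lemma regular_UN: "finite I \<Longrightarrow> (\<And>i. i \<in> I \<Longrightarrow> regular (f i)) \<Longrightarrow> regular (\<Union>i\<in>I. f i)"
proof (induction rule: finite_induct)
  case empty then show ?case by simp
next
  case (insert x F)
  have "regular (f x \<union> (\<Union>i\<in>F. f i))" using insert by (intro regular_Un) auto
  then show ?case by simp
qed

lemma star_append: "x \<in> kleene_star A \<Longrightarrow> y \<in> kleene_star A \<Longrightarrow> x @ y \<in> kleene_star A"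
proof (induction rule: kleene_star.induct)
  case star_Nil then show ?case by simp
next
  case (star_app u v)
  have "v @ y \<in> kleene_star A" using star_app.IH star_app.prems by blast
  with star_app.hyps(1) have "u @ (v @ y) \<in> kleene_star A" by (rule kleene_star.star_app)
  then show ?case by simp
qed

lemma arden:
  assumes "[] \<notin> A" and X: "X = conc A X \<union> B"
  shows "X = conc (kleene_star A) B"
proof -
  have XB: "B \<subseteq> X" and XA: "conc A X \<subseteq> X" and X2: "X \<subseteq> conc A X \<union> B"
    by (subst X, blast)+
  show ?thesis
  proof
  show "conc (kleene_star A) B \<subseteq> X"
  proof -
    have "u \<in> kleene_star A \<Longrightarrow> b \<in> B \<Longrightarrow> u @ b \<in> X" for u b
    proof (induction rule: kleene_star.induct)
      case star_Nil then show ?case using XB by auto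
    next
      case (star_app u v)
      then have "v @ b \<in> X" by blast
      then have "u @ (v @ b) \<in> conc A X" using star_app.hyps(1) unfolding conc_def by blast
      then show ?case using XA by auto
    qed
    then show ?thesis unfolding conc_def by auto
  qed
next
  show "X \<subseteq> conc (kleene_star A) B"
  proof
    fix x assume "x \<in> X"
    then show "x \<in> conc (kleene_star A) B"
    proof (induction x rule: length_induct)
      case (1 x)
      then have "x \<in> conc A X \<or> x \<in> B" using X2 by blast
      then show ?case
      proof
        assume "x \<in> conc A X"
        then obtain u x' where u: "x = u @ x'" "u \<in> A" "x' \<in> X" unfolding conc_def by blast
        with assms(1) have "u \<noteq> []" by auto
        then have "length x' < length x" using u by simp
        have "x' \<in> conc (kleene_star A) B"
          using 1 \<open>length x' < length x\<close> u(3) by blast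
        then obtain s b where "x' = s @ b" "s \<in> kleene_star A" "b \<in> B"
          unfolding conc_def by blast
        moreover have "u @ s \<in> kleene_star A" using u(2) \<open>s \<in> kleene_star A\<close> by (rule kleene_star.star_app)
        moreover have "x = (u @ s) @ b" using u \<open>x' = s @ b\<close> by simp
        ultimately show ?case using \<open>b \<in> B\<close> unfolding conc_def by blast
      next
        assume "x \<in> B"
        moreover have "[] \<in> kleene_star A" by (rule kleene_star.star_Nil)
        moreover have "x = [] @ x" by simp
        ultimately show ?case unfolding conc_def by blast
      qed
    qed
  qed
  qed
qed



lemma solve:
  "finite V \<Longrightarrow> (\<forall>v\<in>V. X v = E v \<union> (\<Union>u\<in>V. conc (C v u) (X u))) \<Longrightarrow>
   (\<forall>v\<in>V. regular (E v)) \<Longrightarrow> (\<forall>v\<in>V. \<forall>u\<in>V. regular (C v u) \<and> [] \<notin> C v u) \<Longrightarrow>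
   \<forall>v\<in>V. regular (X v)"
proof (induction V arbitrary: E C rule: finite_induct)
  case empty then show ?case by simp
next
  case (insert t V)
  define S where "S = kleene_star (C t t)"
  define E' where "E' v = E v \<union> conc (C v t) (conc S (E t))" for v
  define C' where "C' v u = C v u \<union> conc (C v t) (conc S (C t u))" for v u
  have h: "X t = E t \<union> (\<Union>u\<in>insert t V. conc (C t u) (X u))"
    using insert.prems(1) by blast
  have h2: "E t \<union> (\<Union>u\<in>insert t V. conc (C t u) (X u)) = conc (C t t) (X t) \<union> (E t \<union> (\<Union>u\<in>V. conc (C t u) (X u)))"
    by (simp only: UN_insert) blast
  have eqt: "X t = conc (C t t) (X t) \<union> (E t \<union> (\<Union>u\<in>V. conc (C t u) (X u)))"
    using h h2 by (rule trans)
  have Xt: "X t = conc S (E t \<union> (\<Union>u\<in>V. conc (C t u) (X u)))"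
    unfolding S_def by (rule arden[OF _ eqt]) (use insert.prems(3) in auto)
  have eqV: "\<forall>v\<in>V. X v = E' v \<union> (\<Union>u\<in>V. conc (C' v u) (X u))"
  proof
    fix v assume v: "v \<in> V"
    have h: "X v = E v \<union> (\<Union>u\<in>insert t V. conc (C v u) (X u))"
      using insert.prems(1) v by blast
    have h2: "E v \<union> (\<Union>u\<in>insert t V. conc (C v u) (X u)) = E v \<union> conc (C v t) (X t) \<union> (\<Union>u\<in>V. conc (C v u) (X u))"
      by (simp only: UN_insert) blast
    have e1: "X v = E v \<union> conc (C v t) (X t) \<union> (\<Union>u\<in>V. conc (C v u) (X u))"
      using h h2 by (rule trans)
    have e2: "conc (C v t) (X t) = conc (C v t) (conc S (E t)) \<union>
        (\<Union>u\<in>V. conc (conc (C v t) (conc S (C t u))) (X u))"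
      unfolding Xt conc_Un2 conc_UN2 by (simp add: conc_assoc)
    have e3: "(\<Union>u\<in>V. conc (C' v u) (X u)) = (\<Union>u\<in>V. conc (C v u) (X u)) \<union>
        (\<Union>u\<in>V. conc (conc (C v t) (conc S (C t u))) (X u))"
      unfolding C'_def conc_Un1 by (simp add: UN_Un_distrib)
    have e4: "E v \<union> conc (C v t) (X t) \<union> (\<Union>u\<in>V. conc (C v u) (X u)) = E' v \<union> (\<Union>u\<in>V. conc (C' v u) (X u))"
      unfolding e2 e3 E'_def by blast
    show "X v = E' v \<union> (\<Union>u\<in>V. conc (C' v u) (X u))"
      using e1 e4 by (rule trans)
  qed
  have rS: "regular S" unfolding S_def using insert.prems(3) by auto
  have "\<forall>v\<in>V. regular (X v)"
  proof (rule insert.IH[OF eqV])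
    show "\<forall>v\<in>V. regular (E' v)" unfolding E'_def using insert.prems(2,3) rS
      by (intro ballI regular_Un regular_conc) auto
    show "\<forall>v\<in>V. \<forall>u\<in>V. regular (C' v u) \<and> [] \<notin> C' v u"
      unfolding C'_def using insert.prems(3) rS by auto
  qed
  moreover have "regular (X t)" unfolding Xt
    using rS insert.prems(2,3) calculation insert.hyps(1)
    by (intro regular_conc regular_Un regular_UN) auto
  ultimately show ?case by auto
qed

definition Derivs :: "'a list \<Rightarrow> 'a list set \<Rightarrow> 'a list set" where
  "Derivs w L = {z. w @ z \<in> L}"

lemma Derivs_Derivs[simp]: "Derivs u (Derivs w L) = Derivs (w @ u) L"
  unfolding Derivs_def by auto
lemma Derivs_Nil[simp]: "Derivs [] L = L" unfolding Derivs_def by auto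

lemma finite_quot_regular:
  assumes S: "finite S" and L: "L \<subseteq> lists S" and fin: "finite (range (\<lambda>w. Derivs w L))"
  shows "regular L"
proof -
  define Q where "Q = range (\<lambda>w. Derivs w L)"
  define E where "E v = (if [] \<in> v then {[]} else ({}::'a list set))" for v :: "'a list set"
  define C where "C v u = {[a] | a. a \<in> S \<and> Derivs [a] v = u}" for v u :: "'a list set"
  have sub: "v \<in> Q \<Longrightarrow> v \<subseteq> lists S" for v
    using L unfolding Q_def Derivs_def by auto
  have eq: "\<forall>v\<in>Q. id v = E v \<union> (\<Union>u\<in>Q. conc (C v u) (id u))"
  proof
    fix v assume v: "v \<in> Q"
    show "id v = E v \<union> (\<Union>u\<in>Q. conc (C v u) (id u))"
    proof (intro equalityI subsetI)
      fix z assume z: "z \<in> id v"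
      show "z \<in> E v \<union> (\<Union>u\<in>Q. conc (C v u) (id u))"
      proof (cases z)
        case Nil then show ?thesis using z unfolding E_def by auto
      next
        case (Cons a z')
        from v obtain w where w: "v = Derivs w L" unfolding Q_def by auto
        have "z \<in> lists S" using sub[OF v] z by auto
        then have aS: "a \<in> S" using Cons by simp
        have "Derivs [a] v = Derivs (w @ [a]) L" unfolding w by simp
        then have "Derivs [a] v \<in> Q" unfolding Q_def by (metis rangeI)
        moreover have "z \<in> conc (C v (Derivs [a] v)) (Derivs [a] v)"
        proof -
          have 1: "[a] \<in> C v (Derivs [a] v)" unfolding C_def using aS by auto
          have 2: "z' \<in> Derivs [a] v" using z Cons by (simp add: Derivs_def)
          have "z = [a] @ z'" using Cons by simp
          then show ?thesis unfolding conc_def using 1 2 by blast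
        qed
        ultimately show ?thesis by auto
      qed
    next
      fix z assume "z \<in> E v \<union> (\<Union>u\<in>Q. conc (C v u) (id u))"
      then consider "z \<in> E v" | u where "u \<in> Q" "z \<in> conc (C v u) u" by auto
      then show "z \<in> id v"
      proof cases
        case 1 then show ?thesis unfolding E_def by (simp split: if_splits)
      next
        case 2
        then obtain a z' where "z = [a] @ z'" "Derivs [a] v = u" "z' \<in> u"
          unfolding conc_def C_def by blast
        then show ?thesis unfolding Derivs_def by auto
      qed
    qed
  qed
  have "\<forall>v\<in>Q. regular (id v)"
  proof (rule solve[OF _ eq])
    show "finite Q" using fin unfolding Q_def .
    show "\<forall>v\<in>Q. regular (E v)" unfolding E_def by simp
    show "\<forall>v\<in>Q. \<forall>u\<in>Q. regular (C v u) \<and> [] \<notin> C v u"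
    proof (intro ballI conjI)
      fix v u
      have "C v u \<subseteq> (\<lambda>a. [a]) ` S" unfolding C_def by auto
      then show "regular (C v u)" using S by (meson finite_imageI finite_subset regular_finite)
      show "[] \<notin> C v u" unfolding C_def by auto
    qed
  qed
  moreover have "L \<in> Q" unfolding Q_def by (metis Derivs_Nil rangeI)
  ultimately show ?thesis by auto
qed



lemma finite_lang_quot: "finite W \<Longrightarrow> finite (range (\<lambda>w. Derivs w W))"
proof -
  assume W: "finite W"
  define SUF where "SUF = (\<Union>x\<in>W. (\<lambda>n. drop n x) ` {..length x})"
  have "finite SUF" unfolding SUF_def using W by auto
  moreover have "range (\<lambda>w. Derivs w W) \<subseteq> Pow SUF"
  proof
    fix X assume "X \<in> range (\<lambda>w. Derivs w W)"
    then obtain w where X: "X = Derivs w W" by auto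
    show "X \<in> Pow SUF"
    proof (rule PowI, rule subsetI)
      fix z assume "z \<in> X"
      then have "w @ z \<in> W" unfolding X Derivs_def by auto
      moreover have "z = drop (length w) (w @ z)" by simp
      ultimately show "z \<in> SUF" unfolding SUF_def by fastforce
    qed
  qed
  ultimately show ?thesis by (meson finite_Pow_iff finite_subset)
qed

lemma Derivs_Un: "Derivs w (A \<union> B) = Derivs w A \<union> Derivs w B" unfolding Derivs_def by auto
lemma Derivs_Int: "Derivs w (A \<inter> B) = Derivs w A \<inter> Derivs w B" unfolding Derivs_def by auto
lemma Derivs_Diff: "Derivs w (A - B) = Derivs w A - Derivs w B" unfolding Derivs_def by auto

lemma Derivs_conc: "Derivs w (conc A B) = conc (Derivs w A) B \<union> \<Union>((\<lambda>v. Derivs v B) ` {v. \<exists>u. w = u @ v \<and> u \<in> A})"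
  unfolding Derivs_def conc_def
  by (auto simp: append_eq_append_conv2)

lemma star_split: "u @ w \<in> kleene_star A \<Longrightarrow> u \<noteq> [] \<Longrightarrow>
  \<exists>x v r y. u = x @ v \<and> v \<noteq> [] \<and> x \<in> kleene_star A \<and> v @ r \<in> A \<and> w = r @ y \<and> y \<in> kleene_star A"
proof (induction "u @ w" arbitrary: u w rule: kleene_star.induct)
  case star_Nil then show ?case by simp
next
  case (star_app a z)
  show ?case
  proof (cases "length u \<le> length a")
    case True
    then obtain r where "a = u @ r" "w = r @ z" using star_app.hyps(4)
      by (metis append_eq_append_conv_if append_take_drop_id)
    then show ?thesis using star_app by (intro exI[of _ "[]"] exI[of _ u] exI[of _ r] exI[of _ z])
        (auto intro: kleene_star.intros)
  next
    case False
    then obtain u' where u': "u = a @ u'" "z = u' @ w" "u' \<noteq> []" using star_app.hyps(4)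
      by (metis append_eq_append_conv_if append_take_drop_id le_cases append.right_neutral
          length_append nat_le_linear take_all)
    from star_app.hyps(3)[OF u'(2) u'(3)] obtain x v r y where
      "u' = x @ v" "v \<noteq> []" "x \<in> kleene_star A" "v @ r \<in> A" "w = r @ y" "y \<in> kleene_star A" by blast
    then show ?thesis using u' star_app.hyps(1)
      by (intro exI[of _ "a @ x"] exI[of _ v] exI[of _ r] exI[of _ y]) (auto intro: kleene_star.intros)
  qed
qed

lemma Derivs_star: "w \<noteq> [] \<Longrightarrow> Derivs w (kleene_star A) =
   \<Union>((\<lambda>v. conc (Derivs v A) (kleene_star A)) ` {v. v \<noteq> [] \<and> (\<exists>x. x \<in> kleene_star A \<and> w = x @ v)})"
proof (intro equalityI subsetI)
  fix z assume "w \<noteq> []" "z \<in> Derivs w (kleene_star A)"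
  then obtain x v r y where "w = x @ v" "v \<noteq> []" "x \<in> kleene_star A" "v @ r \<in> A" "z = r @ y" "y \<in> kleene_star A"
    using star_split unfolding Derivs_def by blast
  then show "z \<in> \<Union>((\<lambda>v. conc (Derivs v A) (kleene_star A)) ` {v. v \<noteq> [] \<and> (\<exists>x. x \<in> kleene_star A \<and> w = x @ v)})"
    unfolding conc_def Derivs_def by blast
next
  fix z assume "z \<in> \<Union>((\<lambda>v. conc (Derivs v A) (kleene_star A)) ` {v. v \<noteq> [] \<and> (\<exists>x. x \<in> kleene_star A \<and> w = x @ v)})"
  then obtain x v r y where "w = x @ v" "x \<in> kleene_star A" "v @ r \<in> A" "z = r @ y" "y \<in> kleene_star A"
    unfolding conc_def Derivs_def by blast
  then have "x @ ((v @ r) @ y) \<in> kleene_star A" by (intro star_append kleene_star.star_app)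
  then show "z \<in> Derivs w (kleene_star A)" unfolding Derivs_def using \<open>w = x @ v\<close> \<open>z = r @ y\<close> by simp
qed

lemma lang_quot_finite: "finite (range (\<lambda>w. Derivs w (lang r)))"
proof (induction r)
  case Zero then show ?case using finite_lang_quot[of "{}"] by simp
next
  case One then show ?case using finite_lang_quot[of "{[]}"] by simp
next
  case (Atom a) then show ?case using finite_lang_quot[of "{[a]}"] by simp
next
  case (Plus r s)
  have "range (\<lambda>w. Derivs w (lang (Plus r s))) \<subseteq>
        (\<lambda>(X,Y). X \<union> Y) ` (range (\<lambda>w. Derivs w (lang r)) \<times> range (\<lambda>w. Derivs w (lang s)))"
    by (auto simp: Derivs_Un)
  then show ?case using Plus by (meson finite_SigmaI finite_imageI finite_subset)
next
  case (Times r s)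
  let ?QA = "range (\<lambda>w. Derivs w (lang r))" and ?QB = "range (\<lambda>w. Derivs w (lang s))"
  have "range (\<lambda>w. Derivs w (lang (Times r s))) \<subseteq>
        (\<lambda>(X,T). conc X (lang s) \<union> \<Union>T) ` (?QA \<times> Pow ?QB)"
  proof
    fix Y assume "Y \<in> range (\<lambda>w. Derivs w (lang (Times r s)))"
    then obtain w where Y: "Y = Derivs w (lang (Times r s))" by auto
    let ?T = "(\<lambda>v. Derivs v (lang s)) ` {v. \<exists>u. w = u @ v \<and> u \<in> lang r}"
    have "Y = (\<lambda>(X,T). conc X (lang s) \<union> \<Union>T) (Derivs w (lang r), ?T)"
      unfolding Y by (simp add: Derivs_conc)
    moreover have "(Derivs w (lang r), ?T) \<in> ?QA \<times> Pow ?QB" by auto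
    ultimately show "Y \<in> (\<lambda>(X,T). conc X (lang s) \<union> \<Union>T) ` (?QA \<times> Pow ?QB)" by blast
  qed
  then show ?case using Times by (meson finite_SigmaI finite_imageI finite_subset finite_Pow_iff)
next
  case (Star r)
  let ?QA = "range (\<lambda>w. Derivs w (lang r))"
  let ?St = "kleene_star (lang r)"
  have "range (\<lambda>w. Derivs w (lang (Star r))) \<subseteq>
        insert ?St ((\<lambda>T. \<Union>X\<in>T. conc X ?St) ` Pow ?QA)"
  proof
    fix Y assume "Y \<in> range (\<lambda>w. Derivs w (lang (Star r)))"
    then obtain w where Y: "Y = Derivs w ?St" by auto
    show "Y \<in> insert ?St ((\<lambda>T. \<Union>X\<in>T. conc X ?St) ` Pow ?QA)"
    proof (cases "w = []")
      case True then show ?thesis using Y by simp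
    next
      case False
      let ?T = "(\<lambda>v. Derivs v (lang r)) ` {v. v \<noteq> [] \<and> (\<exists>x. x \<in> ?St \<and> w = x @ v)}"
      have "Y = (\<Union>X\<in>?T. conc X ?St)" unfolding Y Derivs_star[OF False] by simp
      moreover have "?T \<in> Pow ?QA" by auto
      ultimately show ?thesis by blast
    qed
  qed
  then show ?case using Star by (meson finite_imageI finite_subset finite_Pow_iff finite_insert)
qed

lemma regular_quot_finite: "regular L \<Longrightarrow> finite (range (\<lambda>w. Derivs w L))"
  unfolding regular_def using lang_quot_finite by blast

lemma regular_Int:
  assumes "regular A" "regular B" "finite S" "A \<subseteq> lists S"
  shows "regular (A \<inter> B)"
proof (rule finite_quot_regular[OF assms(3)])
  show "A \<inter> B \<subseteq> lists S" using assms(4) by auto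
  have "range (\<lambda>w. Derivs w (A \<inter> B)) \<subseteq> (\<lambda>(X,Y). X \<inter> Y) ` (range (\<lambda>w. Derivs w A) \<times> range (\<lambda>w. Derivs w B))"
    by (auto simp: Derivs_Int)
  then show "finite (range (\<lambda>w. Derivs w (A \<inter> B)))"
    using regular_quot_finite[OF assms(1)] regular_quot_finite[OF assms(2)]
    by (meson finite_SigmaI finite_imageI finite_subset)
qed

lemma regular_Diff:
  assumes "regular A" "regular B" "finite S" "A \<subseteq> lists S"
  shows "regular (A - B)"
proof (rule finite_quot_regular[OF assms(3)])
  show "A - B \<subseteq> lists S" using assms(4) by auto
  have "range (\<lambda>w. Derivs w (A - B)) \<subseteq> (\<lambda>(X,Y). X - Y) ` (range (\<lambda>w. Derivs w A) \<times> range (\<lambda>w. Derivs w B))"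
    by (auto simp: Derivs_Diff)
  then show "finite (range (\<lambda>w. Derivs w (A - B)))"
    using regular_quot_finite[OF assms(1)] regular_quot_finite[OF assms(2)]
    by (meson finite_SigmaI finite_imageI finite_subset)
qed



lemma conc_lists: "A \<subseteq> lists S \<Longrightarrow> B \<subseteq> lists S \<Longrightarrow> conc A B \<subseteq> lists S"
proof
  fix x assume "A \<subseteq> lists S" "B \<subseteq> lists S" "x \<in> conc A B"
  then obtain u v where "x = u @ v" "u \<in> lists S" "v \<in> lists S" unfolding conc_def by blast
  then show "x \<in> lists S" by simp
qed

lemma subst_word_regular_over:
  "w \<in> lists D \<Longrightarrow> reg_subst D S phi \<Longrightarrow> regular_over S (subst_word phi w)"
proof (induction w)
  case Nil then show ?case by (simp add: regular_over_def)
next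
  case (Cons d w)
  then have a: "regular_over S (phi d)" unfolding reg_subst_def by simp
  have b: "regular_over S (subst_word phi w)" using Cons by simp
  have "regular (conc (phi d) (subst_word phi w))"
    using a b unfolding regular_over_def by (intro regular_conc) simp_all
  moreover have "conc (phi d) (subst_word phi w) \<subseteq> lists S"
    using a b unfolding regular_over_def by (intro conc_lists) simp_all
  ultimately show ?case unfolding regular_over_def by simp
qed

lemma presents_elems: "presents S D K phi R \<Longrightarrow> L \<in> R \<Longrightarrow> regular_over S L"
proof -
  assume p: "presents S D K phi R" and L: "L \<in> R"
  then obtain w where w: "w \<in> K" "L = subst_word phi w" unfolding presents_def by blast
  have "w \<in> lists D" using p w(1) unfolding presents_def plus_words_def by blast
  moreover have "reg_subst D S phi" using p unfolding presents_def by blast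
  ultimately show ?thesis using w(2) subst_word_regular_over by blast
qed

lemma finite_rational:
  assumes "finite R" "\<forall>L\<in>R. regular_over S L"
  shows "rational_set S R"
proof -
  obtain Ls where Ls: "set Ls = R" using finite_list[OF assms(1)] by blast
  define D :: "nat set" where "D = {0..length Ls}"
  define phi where "phi i = (if i < length Ls then Ls ! i else {})" for i
  define K where "K = (\<lambda>i. [i]) ` {0..<length Ls}"
  have "presents S D K phi R" unfolding presents_def
  proof (intro conjI)
    show "alphabet D" unfolding alphabet_def D_def by auto
    show "reg_subst D S phi" unfolding reg_subst_def
    proof
      fix i assume "i \<in> D"
      show "regular_over S (phi i)"
      proof (cases "i < length Ls")
        case True
        then have "Ls ! i \<in> R" using Ls nth_mem by blast
        then show ?thesis unfolding phi_def using True assms(2) by simp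
      next
        case False
        then show ?thesis unfolding phi_def regular_over_def by simp
      qed
    qed
    show "K \<subseteq> plus_words D" unfolding K_def D_def plus_words_def by auto
    show "regular K" unfolding K_def by (rule regular_finite) simp
    have "subst_word phi ` K = (\<lambda>i. Ls ! i) ` {0..<length Ls}"
      unfolding K_def image_image by (simp add: phi_def)
    also have "\<dots> = set Ls" by (auto simp: set_conv_nth)
    finally show "R = subst_word phi ` K" using Ls by simp
  qed
  then show ?thesis unfolding rational_set_def by blast
qed

lemma part2:
  assumes "alphabet S" "rational_set S R1" "rational_set S R2" "finite R1" "finite R2"
  shows "rational_set S (cart op R1 R2)"
proof (rule finite_rational)
  have "cart op R1 R2 \<subseteq> (\<lambda>(A,B). apply_op op A B) ` (R1 \<times> R2)"
  proof
    fix L assume "L \<in> cart op R1 R2"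
    then obtain A B where L: "L = apply_op op A B" "A \<in> R1" "B \<in> R2" unfolding cart_def by blast
    then show "L \<in> (\<lambda>(A,B). apply_op op A B) ` (R1 \<times> R2)" by (intro image_eqI[of _ _ "(A,B)"]) simp_all
  qed
  moreover have "finite ((\<lambda>(A,B). apply_op op A B) ` (R1 \<times> R2))" using assms(4,5) by simp
  ultimately show "finite (cart op R1 R2)" by (rule finite_subset)
  have r1: "L \<in> R1 \<Longrightarrow> regular_over S L" for L
    using assms(2) presents_elems unfolding rational_set_def by blast
  have r2: "L \<in> R2 \<Longrightarrow> regular_over S L" for L
    using assms(3) presents_elems unfolding rational_set_def by blast
  have fS: "finite S" using assms(1) unfolding alphabet_def by simp
  show "\<forall>L\<in>cart op R1 R2. regular_over S L"
  proof
    fix L assume "L \<in> cart op R1 R2"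
    then obtain A B where L: "L = apply_op op A B" "A \<in> R1" "B \<in> R2" unfolding cart_def by blast
    have A: "regular A" "A \<subseteq> lists S" using r1[OF L(2)] unfolding regular_over_def by simp_all
    have B: "regular B" "B \<subseteq> lists S" using r2[OF L(3)] unfolding regular_over_def by simp_all
    have i: "regular (A \<inter> B)" by (rule regular_Int[OF A(1) B(1) fS A(2)])
    have d: "regular (A - B)" by (rule regular_Diff[OF A(1) B(1) fS A(2)])
    show "regular_over S L" unfolding L(1) regular_over_def
      using A B i d by (cases op) auto
  qed
qed



lemma three_distinct:
  assumes "a1 \<noteq> a2" "b1 \<noteq> b2" "length a1 \<le> length a2" "length b1 \<le> length b2"
  shows "a1 @ b1 \<noteq> a1 @ b2 \<and> a1 @ b2 \<noteq> a2 @ b2 \<and> a1 @ b1 \<noteq> a2 @ b2"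
proof (intro conjI)
  show "a1 @ b1 \<noteq> a1 @ b2" using assms(2) by simp
  show "a1 @ b2 \<noteq> a2 @ b2" using assms(1) by simp
  show "a1 @ b1 \<noteq> a2 @ b2"
  proof
    assume h: "a1 @ b1 = a2 @ b2"
    then have "length a1 + length b1 = length a2 + length b2" by (metis length_append)
    then have "length a1 = length a2" using assms(3,4) by linarith
    then show False using h assms(1) by (simp add: append_eq_append_conv)
  qed
qed

lemma pigeon3: "p \<noteq> q \<Longrightarrow> q \<noteq> r \<Longrightarrow> p \<noteq> r \<Longrightarrow> p \<in> {x, y} \<Longrightarrow> q \<in> {x, y} \<Longrightarrow> r \<in> {x, y} \<Longrightarrow> False"
  by auto

lemma not_both_two_ord:
  assumes "conc A B = {x, y}" "c1 \<in> A" "c2 \<in> A" "c1 \<noteq> c2" "d1 \<in> B" "d2 \<in> B" "d1 \<noteq> d2"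
    "length c1 \<le> length c2" "length d1 \<le> length d2"
  shows False
proof -
  have mem: "a \<in> A \<Longrightarrow> b \<in> B \<Longrightarrow> a @ b \<in> {x, y}" for a b using assms(1) unfolding conc_def by blast
  have d: "c1 @ d1 \<noteq> c1 @ d2" "c1 @ d2 \<noteq> c2 @ d2" "c1 @ d1 \<noteq> c2 @ d2"
    using three_distinct[OF assms(4) assms(7) assms(8) assms(9)] by simp_all
  have m: "c1 @ d1 \<in> {x,y}" "c1 @ d2 \<in> {x,y}" "c2 @ d2 \<in> {x,y}"
    using mem assms(2,3,5,6) by blast+
  show False by (rule pigeon3[OF d(1) d(2) d(3) m(1) m(2) m(3)])
qed

lemma not_both_two:
  assumes "conc A B = {x, y}" "a1 \<in> A" "a2 \<in> A" "a1 \<noteq> a2" "b1 \<in> B" "b2 \<in> B" "b1 \<noteq> b2"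
  shows False
proof (cases "length a1 \<le> length a2")
  case True
  show False
  proof (cases "length b1 \<le> length b2")
    case True2: True
    show False by (rule not_both_two_ord[OF assms(1-7) True True2])
  next
    case False
    then have "length b2 \<le> length b1" by simp
    show False by (rule not_both_two_ord[OF assms(1-4) assms(6) assms(5) assms(7)[symmetric] True \<open>length b2 \<le> length b1\<close>])
  qed
next
  case False
  then have F: "length a2 \<le> length a1" by simp
  show False
  proof (cases "length b1 \<le> length b2")
    case True2: True
    show False by (rule not_both_two_ord[OF assms(1) assms(3) assms(2) assms(4)[symmetric] assms(5-7) F True2])
  next
    case False
    then have "length b2 \<le> length b1" by simp
    show False by (rule not_both_two_ord[OF assms(1) assms(3) assms(2) assms(4)[symmetric] assms(6) assms(5) assms(7)[symmetric] F \<open>length b2 \<le> length b1\<close>])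
  qed
qed

lemma conc_single1: "conc {a} B = (\<lambda>b. a @ b) ` B" unfolding conc_def by blast
lemma conc_single2: "conc A {b} = (\<lambda>a. a @ b) ` A" unfolding conc_def by blast

lemma image_two:
  assumes "f ` B = {x, y}" "inj f"
  shows "\<exists>x' y'. B = {x', y'} \<and> x = f x' \<and> y = f y'"
proof -
  have "x \<in> f ` B" "y \<in> f ` B" using assms(1) by simp_all
  then obtain x' y' where xy: "x' \<in> B" "x = f x'" "y' \<in> B" "y = f y'" by blast
  have "B \<subseteq> {x', y'}"
  proof
    fix b assume "b \<in> B"
    then have "f b \<in> {x, y}" using assms(1) by blast
    then have "f b = f x' \<or> f b = f y'" using xy by simp
    then show "b \<in> {x', y'}" using assms(2) by (auto dest: injD)
  qed
  then have "B = {x', y'}" using xy by blast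
  then show ?thesis using xy by blast
qed

lemma conc_two:
  assumes "conc A B = {x, y}" "x \<noteq> y"
  shows "(\<exists>a x' y'. A = {a} \<and> B = {x', y'} \<and> x = a @ x' \<and> y = a @ y' \<and> x' \<noteq> y') \<or>
         (\<exists>b x' y'. B = {b} \<and> A = {x', y'} \<and> x = x' @ b \<and> y = y' @ b)"
proof -
  have "x \<in> conc A B" using assms(1) by simp
  then obtain a0 b0 where ab0: "a0 \<in> A" "b0 \<in> B" unfolding conc_def by blast
  show ?thesis
  proof (cases "\<forall>a\<in>A. a = a0")
    case True
    then have A: "A = {a0}" using ab0 by blast
    have i1: "(\<lambda>b. a0 @ b) ` B = {x, y}" using assms(1) unfolding A conc_single1 .
    have i2: "inj (\<lambda>b. a0 @ b)" by (simp add: inj_def)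
    obtain x' y' where "B = {x', y'}" "x = a0 @ x'" "y = a0 @ y'"
      using image_two[OF i1 i2] by blast
    moreover then have "x' \<noteq> y'" using assms(2) by blast
    ultimately show ?thesis using A by blast
  next
    case False
    then obtain a1 where a1: "a1 \<in> A" "a1 \<noteq> a0" by blast
    have "\<forall>b\<in>B. b = b0"
    proof
      fix b assume "b \<in> B"
      show "b = b0"
      proof (rule ccontr)
        assume "b \<noteq> b0"
        show False by (rule not_both_two[OF assms(1) ab0(1) a1(1) a1(2)[symmetric] \<open>b \<in> B\<close> ab0(2) \<open>b \<noteq> b0\<close>])
      qed
    qed
    then have B: "B = {b0}" using ab0 by blast
    have i1: "(\<lambda>a. a @ b0) ` A = {x, y}" using assms(1) unfolding B conc_single2 .
    have i2: "inj (\<lambda>a. a @ b0)" by (simp add: inj_def)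
    obtain x' y' where "A = {x', y'}" "x = x' @ b0" "y = y' @ b0"
      using image_two[OF i1 i2] by blast
    then show ?thesis using B by blast
  qed
qed

lemma two_core:
  "w \<in> lists D \<Longrightarrow> subst_word phi w = {x, y} \<Longrightarrow> x \<noteq> y \<Longrightarrow>
   \<exists>d\<in>D. \<exists>u p q v. x = u @ p @ v \<and> y = u @ q @ v \<and> p \<in> phi d \<and> finite (phi d)"
proof (induction w arbitrary: x y)
  case Nil
  have "x \<in> subst_word phi []" "y \<in> subst_word phi []" using Nil.prems(2) by simp_all
  then show ?case using Nil.prems(3) by simp
next
  case (Cons d w)
  from conc_two[OF Cons.prems(2)[simplified] Cons.prems(3)] show ?case
  proof
    assume "\<exists>a x' y'. phi d = {a} \<and> subst_word phi w = {x', y'} \<and> x = a @ x' \<and> y = a @ y' \<and> x' \<noteq> y'"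
    then obtain a x' y' where h: "subst_word phi w = {x', y'}" "x = a @ x'" "y = a @ y'" "x' \<noteq> y'" by blast
    from Cons.IH[OF _ h(1) h(4)] Cons.prems(1) obtain d' u p q v where
      "d' \<in> D" "x' = u @ p @ v" "y' = u @ q @ v" "p \<in> phi d'" "finite (phi d')" by auto
    then have "x = (a @ u) @ p @ v" "y = (a @ u) @ q @ v" using h by simp_all
    then show ?case using \<open>d' \<in> D\<close> \<open>p \<in> phi d'\<close> \<open>finite (phi d')\<close> by blast
  next
    assume "\<exists>b x' y'. subst_word phi w = {b} \<and> phi d = {x', y'} \<and> x = x' @ b \<and> y = y' @ b"
    then obtain b x' y' where h: "phi d = {x', y'}" "x = x' @ b" "y = y' @ b" by blast
    have "x = [] @ x' @ b" "y = [] @ y' @ b" "x' \<in> phi d" "finite (phi d)" "d \<in> D"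
      using h Cons.prems(1) by simp_all
    then show ?case by blast
  qed
qed

lemma invariant:
  assumes "presents S D K phi R"
  shows "\<exists>M. \<forall>x y. {x, y} \<in> R \<longrightarrow> x \<noteq> y \<longrightarrow> (\<exists>u p q v. x = u @ p @ v \<and> y = u @ q @ v \<and> length p \<le> M)"
proof -
  have D: "finite D" using assms unfolding presents_def alphabet_def by auto
  define T where "T = (\<Union>d\<in>{d\<in>D. finite (phi d)}. phi d)"
  have fT: "finite T" unfolding T_def using D by auto
  define M where "M = Max (length ` T)"
  have "\<forall>x y. {x, y} \<in> R \<longrightarrow> x \<noteq> y \<longrightarrow> (\<exists>u p q v. x = u @ p @ v \<and> y = u @ q @ v \<and> length p \<le> M)"
  proof (intro allI impI)
    fix x y assume xy: "{x, y} \<in> R" "x \<noteq> y"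
    have RK: "R = subst_word phi ` K" using assms unfolding presents_def by blast
    obtain w where w: "w \<in> K" "{x, y} = subst_word phi w" using xy(1) unfolding RK by blast
    have "w \<in> lists D" using w(1) assms unfolding presents_def plus_words_def by auto
    from two_core[OF this w(2)[symmetric] xy(2)] obtain d u p q v where
      h: "d \<in> D" "x = u @ p @ v" "y = u @ q @ v" "p \<in> phi d" "finite (phi d)" by blast
    have "p \<in> T" unfolding T_def using h by blast
    then have "length p \<le> M" unfolding M_def using fT by simp
    then show "\<exists>u p q v. x = u @ p @ v \<and> y = u @ q @ v \<and> length p \<le> M" using h by blast
  qed
  then show ?thesis by blast
qed

lemma not_rational_if:
  assumes "\<And>n. n \<ge> 1 \<Longrightarrow> {replicate n (0::nat), replicate n 1} \<in> R"
  shows "\<not> presents S D K phi R"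
proof
  assume "presents S D K phi R"
  from invariant[OF this] obtain M where
    M: "\<forall>x y. {x, y} \<in> R \<longrightarrow> x \<noteq> y \<longrightarrow> (\<exists>u p q v. x = u @ p @ v \<and> y = u @ q @ v \<and> length p \<le> M)"
    by blast
  let ?n = "Suc M"
  have ne: "replicate ?n (0::nat) \<noteq> replicate ?n 1" by simp
  have inR: "{replicate ?n (0::nat), replicate ?n 1} \<in> R" by (rule assms) simp
  obtain u p q v where h: "replicate ?n (0::nat) = u @ p @ v" "replicate ?n 1 = u @ q @ v" "length p \<le> M"
    using M[rule_format, OF inR ne] by blast
  have r0: "set (replicate ?n (0::nat)) \<subseteq> {0}" by (auto simp: in_set_replicate)
  have r1: "set (replicate ?n (1::nat)) \<subseteq> {1}" by (auto simp: in_set_replicate)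
  have s0: "set (u @ p @ v) \<subseteq> {0}" using r0 unfolding h(1) .
  have s1: "set (u @ q @ v) \<subseteq> {1}" using r1 unfolding h(2) .
  have "z \<notin> set u" for z
  proof
    assume "z \<in> set u"
    then have "z = 0" "z = 1" using s0 s1 by auto
    then show False by simp
  qed
  then have u: "u = []" by (cases u) auto
  have "z \<notin> set v" for z
  proof
    assume "z \<in> set v"
    then have "z = 0" "z = 1" using s0 s1 by auto
    then show False by simp
  qed
  then have v: "v = []" by (cases v) auto
  have "replicate ?n 0 = p" using h(1) u v by simp
  then have "length p = ?n" by (metis length_replicate)
  then show False using h(3) by simp
qed



lemma lists_star: "lists D = kleene_star ((\<lambda>d. [d]) ` D)"
proof (intro equalityI subsetI)
  fix x assume "x \<in> lists D"
  then show "x \<in> kleene_star ((\<lambda>d. [d]) ` D)"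
  proof (induction x)
    case Nil then show ?case by (rule kleene_star.star_Nil)
  next
    case (Cons d x)
    then have "[d] \<in> (\<lambda>d. [d]) ` D" "x \<in> kleene_star ((\<lambda>d. [d]) ` D)" by simp_all
    then have "[d] @ x \<in> kleene_star ((\<lambda>d. [d]) ` D)" by (rule kleene_star.star_app)
    then show ?case by simp
  qed
next
  fix x assume "x \<in> kleene_star ((\<lambda>d. [d]) ` D)"
  then show "x \<in> lists D"
  proof (induction rule: kleene_star.induct)
    case star_Nil then show ?case by simp
  next
    case (star_app u v) then show ?case by auto
  qed
qed

lemma regular_lists: "finite D \<Longrightarrow> regular (lists D)"
  unfolding lists_star by (intro regular_star regular_finite) simp

lemma plus_words_conc: "plus_words D = conc ((\<lambda>d. [d]) ` D) (lists D)"
proof (intro equalityI subsetI)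
  fix x assume "x \<in> plus_words D"
  then obtain d x' where "x = [d] @ x'" "d \<in> D" "x' \<in> lists D"
    unfolding plus_words_def by (cases x) auto
  then show "x \<in> conc ((\<lambda>d. [d]) ` D) (lists D)" unfolding conc_def by blast
next
  fix x assume "x \<in> conc ((\<lambda>d. [d]) ` D) (lists D)"
  then obtain d x' where "x = [d] @ x'" "d \<in> D" "x' \<in> lists D" unfolding conc_def by blast
  then show "x \<in> plus_words D" unfolding plus_words_def by simp
qed

lemma regular_plus_words: "finite D \<Longrightarrow> regular (plus_words D)"
  unfolding plus_words_conc by (intro regular_conc regular_finite regular_lists) simp_all

lemma conc_ss: "conc {a} {b} = {a @ b}" unfolding conc_def by blast

lemma subst_rep: "subst_word (\<lambda>_. {[c]}) w = {replicate (length w) c}"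
proof (induction w)
  case Nil then show ?case by simp
next
  case (Cons d w) then show ?case by (simp add: conc_ss)
qed

lemma conc_sig: "conc {[0::nat], [1]} {x \<in> lists {0, 1}. length x = n} = {x \<in> lists {0, 1}. length x = Suc n}"
proof (intro equalityI subsetI)
  fix x assume "x \<in> conc {[0::nat], [1]} {x \<in> lists {0, 1}. length x = n}"
  then obtain u v where "x = u @ v" "u \<in> {[0], [1]}" "v \<in> lists {0,1}" "length v = n" unfolding conc_def by blast
  then show "x \<in> {x \<in> lists {0, 1}. length x = Suc n}" by auto
next
  fix x assume x: "x \<in> {x \<in> lists {0::nat, 1}. length x = Suc n}"
  then obtain a x' where "x = [a] @ x'" by (cases x) auto
  moreover have "[a] \<in> {[0], [1]}" "x' \<in> {x \<in> lists {0, 1}. length x = n}" using x calculation by auto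
  ultimately show "x \<in> conc {[0::nat], [1]} {x \<in> lists {0, 1}. length x = n}" unfolding conc_def by blast
qed

lemma subst_sig: "subst_word (\<lambda>_. {[0::nat], [1]}) w = {x \<in> lists {0, 1}. length x = length w}"
proof (induction w)
  case Nil then show ?case by auto
next
  case (Cons d w) then show ?case using conc_sig by simp
qed

lemma lists_single: "x \<in> lists {c} \<Longrightarrow> x = replicate (length x) c"
  by (induction x) auto

lemma sig_cap: "{x \<in> lists {0::nat, 1}. length x = n} \<inter> (lists {0} \<union> lists {1}) = {replicate n 0, replicate n 1}"
proof (intro equalityI subsetI)
  fix x assume x: "x \<in> {x \<in> lists {0::nat, 1}. length x = n} \<inter> (lists {0} \<union> lists {1})"
  then have h: "x \<in> lists {0} \<or> x \<in> lists {1}" and len: "length x = n" by auto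
  from h show "x \<in> {replicate n 0, replicate n 1}"
  proof
    assume "x \<in> lists {0}"
    then have "x = replicate (length x) 0" by (rule lists_single)
    then show ?thesis using len by simp
  next
    assume "x \<in> lists {1}"
    then have "x = replicate (length x) 1" by (rule lists_single)
    then show ?thesis using len by simp
  qed
next
  fix x assume "x \<in> {replicate n (0::nat), replicate n 1}"
  then show "x \<in> {x \<in> lists {0::nat, 1}. length x = n} \<inter> (lists {0} \<union> lists {1})"
    by (auto simp: in_set_replicate)
qed

lemma cartI: "L1 \<in> R1 \<Longrightarrow> L2 \<in> R2 \<Longrightarrow> X = apply_op op L1 L2 \<Longrightarrow> X \<in> cart op R1 R2"
  unfolding cart_def by blast

lemma rep_plus: "n \<ge> 1 \<Longrightarrow> replicate n (0::nat) \<in> plus_words {0::nat}"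
  unfolding plus_words_def by (auto simp: in_set_replicate)

lemma presents_rep: "c \<in> {0, 1} \<Longrightarrow> presents {0::nat, 1} {0::nat} (plus_words {0::nat}) (\<lambda>_. {[c]})
   (subst_word (\<lambda>_. {[c]}) ` plus_words {0::nat})"
  unfolding presents_def
proof (intro conjI)
  assume c: "c \<in> {0, 1}"
  show "alphabet {0::nat}" by (simp add: alphabet_def)
  show "reg_subst {0::nat} {0::nat, 1} (\<lambda>_. {[c]})"
    unfolding reg_subst_def regular_over_def using c by simp
  show "plus_words {0::nat} \<subseteq> plus_words {0}" by simp
  show "regular (plus_words {0::nat})" by (rule regular_plus_words) simp
qed simp

lemma presents_sig: "presents {0::nat, 1} {0::nat} (plus_words {0::nat}) (\<lambda>_. {[0::nat], [1]})
   (subst_word (\<lambda>_. {[0::nat], [1]}) ` plus_words {0::nat})"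
  unfolding presents_def
proof (intro conjI)
  show "alphabet {0::nat}" by (simp add: alphabet_def)
  show "reg_subst {0::nat} {0::nat, 1} (\<lambda>_. {[0::nat], [1]})"
    unfolding reg_subst_def regular_over_def by (simp add: regular_finite)
  show "plus_words {0::nat} \<subseteq> plus_words {0}" by simp
  show "regular (plus_words {0::nat})" by (rule regular_plus_words) simp
qed simp

lemma sig_mem: "n \<ge> 1 \<Longrightarrow> {x \<in> lists {0::nat, 1}. length x = n} \<in> subst_word (\<lambda>_. {[0::nat], [1]}) ` plus_words {0::nat}"
proof -
  assume "n \<ge> 1"
  then have "replicate n 0 \<in> plus_words {0::nat}" by (rule rep_plus)
  have "subst_word (\<lambda>_. {[0::nat], [1]}) (replicate n (0::nat)) = {x \<in> lists {0::nat, 1}. length x = length (replicate n (0::nat))}"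
    by (rule subst_sig)
  then have eq: "subst_word (\<lambda>_. {[0::nat], [1]}) (replicate n (0::nat)) = {x \<in> lists {0::nat, 1}. length x = n}"
    by simp
  show ?thesis
  proof (rule image_eqI[where x = "replicate n (0::nat)"])
    show "replicate n (0::nat) \<in> plus_words {0::nat}" by fact
  qed (simp only: eq)
qed

lemma rep_mem: "n \<ge> 1 \<Longrightarrow> {replicate n c} \<in> subst_word (\<lambda>_. {[c]}) ` plus_words {0::nat}"
proof -
  assume "n \<ge> 1"
  then have "replicate n 0 \<in> plus_words {0::nat}" by (rule rep_plus)
  have eq: "subst_word (\<lambda>_. {[c]}) (replicate n (0::nat)) = {replicate n c}"
    by (simp add: subst_rep)
  show ?thesis
  proof (rule image_eqI[where x = "replicate n (0::nat)"])
    show "replicate n (0::nat) \<in> plus_words {0::nat}" by fact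
  qed (simp only: eq)
qed

lemma part1: "\<exists>(S::nat set) R1 R2. alphabet S \<and> rational_set S R1 \<and> rational_set S R2 \<and>
        \<not> rational_set S (cart op R1 R2)"
proof -
  have alph: "alphabet {0::nat, 1}" unfolding alphabet_def by simp
  have rs_sig: "rational_set {0::nat,1} (subst_word (\<lambda>_. {[0::nat], [1]}) ` plus_words {0::nat})"
    unfolding rational_set_def using presents_sig by blast
  have rAB: "regular (lists {0::nat} \<union> lists {1})" by (intro regular_Un regular_lists) simp_all
  have rC: "regular (lists {0::nat, 1} - (lists {0} \<union> lists {1}))"
  proof (rule regular_Diff[where S="{0::nat,1}"])
    show "regular (lists {0::nat, 1})" by (rule regular_lists) simp
  qed (use rAB in simp_all)
  show ?thesis
  proof (cases op)
    case OpUnion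
    let ?R1 = "subst_word (\<lambda>_. {[0::nat]}) ` plus_words {0::nat}"
    let ?R2 = "subst_word (\<lambda>_. {[1::nat]}) ` plus_words {0::nat}"
    have r1: "rational_set {0::nat,1} ?R1" unfolding rational_set_def using presents_rep[of 0] by blast
    have r2: "rational_set {0::nat,1} ?R2" unfolding rational_set_def using presents_rep[of 1] by blast
    have "\<not> rational_set {0::nat,1} (cart op ?R1 ?R2)"
      unfolding rational_set_def
    proof (intro notI, elim exE)
      fix D :: "nat set" and K phi
      assume p: "presents {0, 1} D K phi (cart op ?R1 ?R2)"
      have "\<And>n. n \<ge> 1 \<Longrightarrow> {replicate n (0::nat), replicate n 1} \<in> cart op ?R1 ?R2"
      proof -
        fix n :: nat assume "n \<ge> 1"
        show "{replicate n (0::nat), replicate n 1} \<in> cart op ?R1 ?R2"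
          by (rule cartI[OF rep_mem[OF \<open>n \<ge> 1\<close>] rep_mem[OF \<open>n \<ge> 1\<close>]]) (simp add: OpUnion insert_commute)
      qed
      from not_rational_if[OF this] p show False by blast
    qed
    then have nr: "\<not> rational_set {0::nat,1} (cart op ?R1 ?R2)" .
    show ?thesis
      apply (rule exI[of _ "{0::nat,1}"], rule exI[of _ ?R1], rule exI[of _ ?R2])
      using alph r1 r2 nr by blast
  next
    case OpInter
    let ?R1 = "subst_word (\<lambda>_. {[0::nat], [1]}) ` plus_words {0::nat}"
    let ?R2 = "{lists {0::nat} \<union> lists {1}}"
    have r2: "rational_set {0::nat,1} ?R2"
      by (rule finite_rational) (use rAB in \<open>auto simp: regular_over_def\<close>)
    have "\<not> rational_set {0::nat,1} (cart op ?R1 ?R2)"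
      unfolding rational_set_def
    proof (intro notI, elim exE)
      fix D :: "nat set" and K phi
      assume p: "presents {0, 1} D K phi (cart op ?R1 ?R2)"
      have "\<And>n. n \<ge> 1 \<Longrightarrow> {replicate n (0::nat), replicate n 1} \<in> cart op ?R1 ?R2"
      proof -
        fix n :: nat assume "n \<ge> 1"
        show "{replicate n (0::nat), replicate n 1} \<in> cart op ?R1 ?R2"
          by (rule cartI[OF sig_mem[OF \<open>n \<ge> 1\<close>], of "lists {0::nat} \<union> lists {1}"])
            (simp, simp only: OpInter apply_op.simps sig_cap)
      qed
      from not_rational_if[OF this] p show False by blast
    qed
    then have nr: "\<not> rational_set {0::nat,1} (cart op ?R1 ?R2)" .
    show ?thesis
      apply (rule exI[of _ "{0::nat,1}"], rule exI[of _ ?R1], rule exI[of _ ?R2])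
      using alph rs_sig r2 nr by blast
  next
    case OpDiff
    let ?R1 = "subst_word (\<lambda>_. {[0::nat], [1]}) ` plus_words {0::nat}"
    let ?R2 = "{lists {0::nat, 1} - (lists {0} \<union> lists {1})}"
    have r2: "rational_set {0::nat,1} ?R2"
      by (rule finite_rational) (use rC in \<open>auto simp: regular_over_def\<close>)
    have dif: "{x \<in> lists {0::nat, 1}. length x = n} - (lists {0::nat, 1} - (lists {0} \<union> lists {1}))
        = {replicate n 0, replicate n 1}" for n
    proof -
      have "{x \<in> lists {0::nat, 1}. length x = n} - (lists {0::nat, 1} - (lists {0} \<union> lists {1}))
         = {x \<in> lists {0::nat, 1}. length x = n} \<inter> (lists {0} \<union> lists {1})" by blast
      then show ?thesis using sig_cap by simp
    qed
    have "\<not> rational_set {0::nat,1} (cart op ?R1 ?R2)"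
      unfolding rational_set_def
    proof (intro notI, elim exE)
      fix D :: "nat set" and K phi
      assume p: "presents {0, 1} D K phi (cart op ?R1 ?R2)"
      have "\<And>n. n \<ge> 1 \<Longrightarrow> {replicate n (0::nat), replicate n 1} \<in> cart op ?R1 ?R2"
      proof -
        fix n :: nat assume "n \<ge> 1"
        show "{replicate n (0::nat), replicate n 1} \<in> cart op ?R1 ?R2"
          by (rule cartI[OF sig_mem[OF \<open>n \<ge> 1\<close>], of "lists {0::nat, 1} - (lists {0} \<union> lists {1})"])
            (simp, simp only: OpDiff apply_op.simps dif)
      qed
      from not_rational_if[OF this] p show False by blast
    qed
    then have nr: "\<not> rational_set {0::nat,1} (cart op ?R1 ?R2)" .
    show ?thesis
      apply (rule exI[of _ "{0::nat,1}"], rule exI[of _ ?R1], rule exI[of _ ?R2])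
      using alph rs_sig r2 nr by blast
  qed
qed



lemma presents_fin: "K \<subseteq> plus_words {0::nat} \<Longrightarrow> finite K \<Longrightarrow>
  presents {0::nat} {0::nat} K (\<lambda>_. {[0::nat]}) (subst_word (\<lambda>_. {[0::nat]}) ` K)"
  unfolding presents_def
proof (intro conjI)
  show "alphabet {0::nat}" by (simp add: alphabet_def)
  show "reg_subst {0::nat} {0::nat} (\<lambda>_. {[0::nat]})"
    unfolding reg_subst_def regular_over_def by simp
  assume "K \<subseteq> plus_words {0::nat}" "finite K"
  then show "K \<subseteq> plus_words {0::nat}" "regular K" by (simp_all add: regular_finite)
qed simp

lemma part3: "\<exists>(S::nat set) (D::nat set) phi K1 K2.
        alphabet S \<and> presents S D K1 phi (subst_word phi ` K1) \<and>
        presents S D K2 phi (subst_word phi ` K2) \<and>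
        finite (subst_word phi ` K1) \<and> finite (subst_word phi ` K2) \<and>
        \<not> (\<exists>K'. presents S D K' phi (cart op (subst_word phi ` K1) (subst_word phi ` K2)))"
proof -
  define phi where "phi = (\<lambda>_::nat. {[0::nat]})"
  define K1 :: "nat list set" where "K1 = {[0]}"
  define K2 :: "nat list set" where "K2 = (if op = OpDiff then {[0]} else {[0,0]})"
  have pw: "K1 \<subseteq> plus_words {0}" "K2 \<subseteq> plus_words {0}"
    unfolding K1_def K2_def plus_words_def by auto
  have fin: "finite K1" "finite K2" unfolding K1_def K2_def by auto
  have p1: "presents {0} {0} K1 phi (subst_word phi ` K1)"
    unfolding phi_def by (rule presents_fin[OF pw(1) fin(1)])
  have p2: "presents {0} {0} K2 phi (subst_word phi ` K2)"
    unfolding phi_def by (rule presents_fin[OF pw(2) fin(2)])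
  have R1: "subst_word phi ` K1 = {{[0]}}" unfolding K1_def phi_def by (simp add: conc_ss)
  have X: "apply_op op {[0]} (if op = OpDiff then {[0]} else {[0,0]}) \<in> cart op (subst_word phi ` K1) (subst_word phi ` K2)"
  proof (rule cartI)
    show "{[0::nat]} \<in> subst_word phi ` K1" unfolding R1 by simp
    show "(if op = OpDiff then {[0::nat]} else {[0,0]}) \<in> subst_word phi ` K2"
      unfolding K2_def phi_def by (simp add: conc_ss)
  qed simp
  have nr: "\<not> (\<exists>K'. presents {0} {0} K' phi (cart op (subst_word phi ` K1) (subst_word phi ` K2)))"
  proof
    assume "\<exists>K'. presents {0} {0} K' phi (cart op (subst_word phi ` K1) (subst_word phi ` K2))"
    then obtain K' where "presents {0} {0} K' phi (cart op (subst_word phi ` K1) (subst_word phi ` K2))" by blast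
    then have eq: "cart op (subst_word phi ` K1) (subst_word phi ` K2) = subst_word phi ` K'"
      unfolding presents_def by blast
    obtain w where "apply_op op {[0]} (if op = OpDiff then {[0]} else {[0,0]}) = subst_word phi w"
      using X unfolding eq by blast
    then have h: "apply_op op {[0::nat]} (if op = OpDiff then {[0]} else {[0,0]}) = {replicate (length w) 0}"
      unfolding phi_def subst_rep .
    show False
    proof (cases op)
      case OpUnion
      have e: "{[0::nat]} \<union> {[0,0]} = {replicate (length w) 0}"
        using h unfolding OpUnion by (simp only: apply_op.simps binop.distinct if_False)
      have "[0::nat] \<in> {replicate (length w) 0}" "[0::nat,0] \<in> {replicate (length w) 0}"
        unfolding e[symmetric] by blast+
      then have "length [0::nat] = length w" "length [0::nat,0] = length w" by auto
      then show False by simp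
    next
      case OpInter
      then show False using h by simp
    next
      case OpDiff
      then show False using h by simp
    qed
  qed
  have alph: "alphabet {0::nat}" by (simp add: alphabet_def)
  show ?thesis
    apply (rule exI[of _ "{0::nat}"], rule exI[of _ "{0::nat}"], rule exI[of _ phi], rule exI[of _ K1], rule exI[of _ K2])
    using alph p1 p2 fin nr by simp
qed

theorem corollary2:
  fixes op :: binop
  shows
    "(\<exists>(S::nat set) R1 R2. alphabet S \<and> rational_set S R1 \<and> rational_set S R2 \<and>
        \<not> rational_set S (cart op R1 R2))
   \<and> (\<forall>(S::'a set) R1 R2. alphabet S \<longrightarrow> rational_set S R1 \<longrightarrow> rational_set S R2 \<longrightarrow>
        finite R1 \<longrightarrow> finite R2 \<longrightarrow> rational_set S (cart op R1 R2))
   \<and> (\<exists>(S::nat set) (D::nat set) phi K1 K2.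
        alphabet S \<and> presents S D K1 phi (subst_word phi ` K1) \<and>
        presents S D K2 phi (subst_word phi ` K2) \<and>
        finite (subst_word phi ` K1) \<and> finite (subst_word phi ` K2) \<and>
        \<not> (\<exists>K'. presents S D K' phi (cart op (subst_word phi ` K1) (subst_word phi ` K2))))"
  using part1[of op] part2[of _ _ _ op] part3[of op] by blast


end
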